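(* Let $d, n$ be integers with $n \ge 2d \ge 2$ and put $i := \lfloor n/d \rfloor$. Let $\mathcal{A}_n(d)$ be the set of $g \in S_n$ containing at least one $d$-cycle, and $\mathcal{A}_n^{+}(d)$, $\mathcal{A}_n^{-}(d)$ the subsets of its even, respectively odd, permutations. Let $a(\cdot)$ be defined by $a(0):=0$ and recursively $b(i,j) := \frac{1}{j!\,d^j}(1-a(i-j))$, $a(i) := \sum_{k=1}^i b(i,k)$. Then $$\left| \#\mathcal{A}_n^+(d) - \#\mathcal{A}_n^-(d)\right| \le n! \left( \frac{2n-d-1}{n(n-1)}(1-a(i-1)) + \frac{1}{n(n-1)}(1-a(i-2))\right) \le n! \cdot \frac{2}{n-1},$$ and $$\left| \frac{\#\mathcal{A}_n^+(d) - \#\mathcal{A}_n^-(d)}{\#\mathcal{A}_n(d)} \right| \le \frac{1}{n-1}\cdot \frac{2}{1 - \exp(-\frac{1}{d}) - \frac{2}{(i+1)!\, d^{i+1}}}.$$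
   Context: $S_n$ is the group of permutations of $\{1,\dots,n\}$. *)

theory Defs
  imports "HOL-Analysis.Analysis" "HOL-Combinatorics.Combinatorics"
begin

definition has_cycle_of_length :: "nat \<Rightarrow> nat \<Rightarrow> (nat \<Rightarrow> nat) \<Rightarrow> bool" where
  "has_cycle_of_length n d g \<longleftrightarrow> (\<exists>x\<in>{1..n}. card (orbit g x) = d)"

definition cycA :: "nat \<Rightarrow> nat \<Rightarrow> (nat \<Rightarrow> nat) set" where
  "cycA n d = {g. g permutes {1..n} \<and> has_cycle_of_length n d g}"

definition cycA_plus :: "nat \<Rightarrow> nat \<Rightarrow> (nat \<Rightarrow> nat) set" where
  "cycA_plus n d = {g \<in> cycA n d. evenperm g}"

definition cycA_minus :: "nat \<Rightarrow> nat \<Rightarrow> (nat \<Rightarrow> nat) set" where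
  "cycA_minus n d = {g \<in> cycA n d. \<not> evenperm g}"

function aseq :: "nat \<Rightarrow> nat \<Rightarrow> real" where
  "aseq d 0 = 0"
| "aseq d (Suc m) = (\<Sum>k\<in>{1..Suc m}. (1 / (fact k * real d ^ k)) * (1 - aseq d (Suc m - k)))"
  by pat_completeness auto
termination by (relation "Wellfounded.measure snd") auto

definition bseq :: "nat \<Rightarrow> nat \<Rightarrow> nat \<Rightarrow> real" where
  "bseq d i j = (1 / (fact j * real d ^ j)) * (1 - aseq d (i - j))"

lemma aseq_def_b: "aseq d i = (\<Sum>k\<in>{1..i}. bseq d i k)"
  by (cases i) (simp_all add: bseq_def)

end

theory Submission
  imports Defs
begin


lemma funpow_agree:
  assumes "\<And>x. x \<in> T \<Longrightarrow> g x = p x" "\<And>x. x \<in> T \<Longrightarrow> p x \<in> T" "a \<in> T"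
  shows "(g ^^ n) a = (p ^^ n) a \<and> (p ^^ n) a \<in> T"
  using assms by (induction n) auto

lemma cycle_funpow_nth:
  assumes "distinct cs" "j < length cs"
  shows "(cycle_of_list cs ^^ n) (cs ! j) = cs ! ((n + j) mod length cs)"
proof -
  have "(cycle_of_list cs ^^ n) (cs ! j) = map (cycle_of_list cs ^^ n) cs ! j"
    using assms by simp
  also have "\<dots> = rotate n cs ! j" using cyclic_rotation[OF assms(1)] by simp
  also have "\<dots> = cs ! ((n + j) mod length cs)" using assms by (simp add: nth_rotate)
  finally show ?thesis .
qed

lemma orbit_cycle:
  assumes "distinct cs" "x \<in> set cs"
  shows "orbit (cycle_of_list cs) x = set cs"
proof -
  obtain j where j: "j < length cs" "x = cs ! j" using assms(2) by (metis in_set_conv_nth)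
  have perm: "permutation (cycle_of_list cs)" by (rule permutation_of_cycle)
  have "orbit (cycle_of_list cs) x = {(cycle_of_list cs ^^ n) x | n. True}"
    by (rule orbit_altdef_permutation[OF perm])
  also have "\<dots> = set cs"
  proof (intro set_eqI iffI)
    fix y assume "y \<in> {(cycle_of_list cs ^^ n) x | n. True}"
    then obtain n where "y = (cycle_of_list cs ^^ n) x" by auto
    then show "y \<in> set cs" using j assms cycle_funpow_nth by (metis mod_less_divisor nth_mem length_pos_if_in_set)
  next
    fix y assume "y \<in> set cs"
    then obtain i where i: "i < length cs" "y = cs ! i" by (metis in_set_conv_nth)
    have "(cycle_of_list cs ^^ (i + length cs - j)) x = cs ! ((i + length cs - j + j) mod length cs)"
      using j assms cycle_funpow_nth by metis
    also have "(i + length cs - j + j) mod length cs = i" using i j by simp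
    finally show "y \<in> {(cycle_of_list cs ^^ n) x | n. True}" using i by (metis (mono_tags, lifting) mem_Collect_eq)
  qed
  finally show ?thesis .
qed

lemma sign_cycle:
  assumes "distinct cs"
  shows "sign (cycle_of_list cs) = (-1) ^ (length cs - 1)"
  using assms
proof (induction cs rule: cycle_of_list.induct)
  case (1 i j cs)
  then have "i \<noteq> j" by auto
  have "sign (cycle_of_list (i # j # cs)) = sign (Transposition.transpose i j) * sign (cycle_of_list (j # cs))"
    by (simp add: sign_compose permutation_of_cycle permutation_swap_id)
  also have "\<dots> = - ((-1) ^ (length (j#cs) - 1))" using 1 \<open>i \<noteq> j\<close> by (simp add: sign_swap_id)
  finally show ?case by (simp add: comp_def)
next
  case "2_1" then show ?case by simp
next
  case ("2_2" v) then show ?case by simp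
qed

definition CL :: "'a set \<Rightarrow> 'a \<Rightarrow> 'a list set" where
  "CL S a = {cs. distinct cs \<and> set cs \<subseteq> S \<and> cs \<noteq> [] \<and> hd cs = a}"

definition ext :: "'a \<Rightarrow> ('a \<Rightarrow> 'a) \<Rightarrow> 'a list" where
  "ext a g = map (\<lambda>i. (g ^^ i) a) [0..<card (orbit g a)]"

lemma comp_in:
  assumes "set cs \<subseteq> S" "h permutes (S - set cs)" "x \<in> set cs"
  shows "(cycle_of_list cs \<circ> h) x = cycle_of_list cs x"
  using assms by (simp add: permutes_not_in)

lemma comp_out:
  assumes "set cs \<subseteq> S" "h permutes (S - set cs)" "x \<notin> set cs"
  shows "(cycle_of_list cs \<circ> h) x = h x" "h x \<notin> set cs"
proof -
  show "h x \<notin> set cs"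
  proof (cases "x \<in> S")
    case True then have "h x \<in> S - set cs" using assms permutes_in_image by fastforce
    then show ?thesis by simp
  next
    case False then show ?thesis using assms by (simp add: permutes_not_in)
  qed
  then show "(cycle_of_list cs \<circ> h) x = h x" by (simp add: id_outside_supp)
qed

lemma comp_permutes:
  assumes "set cs \<subseteq> S" "h permutes (S - set cs)"
  shows "(cycle_of_list cs \<circ> h) permutes S"
proof -
  have "cycle_of_list cs permutes S" using cycle_permutes assms(1) permutes_subset by blast
  moreover have "h permutes S" using assms(2) permutes_subset by blast
  ultimately show ?thesis using permutes_compose by blast
qed

lemma comp_orbit_in:
  assumes "distinct cs" "set cs \<subseteq> S" "h permutes (S - set cs)" "x \<in> set cs"
  shows "orbit (cycle_of_list cs \<circ> h) x = set cs"
proof -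
  have "orbit (cycle_of_list cs \<circ> h) x = orbit (cycle_of_list cs) x"
  proof (rule orbit_cong0[where A="set cs"])
    show "x \<in> set cs" by fact
    have ci: "cycle_of_list cs y \<in> set cs" if "y \<in> set cs" for y
      using permutes_in_image[OF cycle_permutes[of cs]] that by blast
    show "cycle_of_list cs \<circ> h \<in> set cs \<rightarrow> set cs"
      using ci comp_in[OF assms(2,3)] by auto
    show "\<And>y. y \<in> set cs \<Longrightarrow> (cycle_of_list cs \<circ> h) y = cycle_of_list cs y"
      using comp_in[OF assms(2,3)] by blast
  qed
  then show ?thesis using orbit_cycle assms by metis
qed

lemma comp_orbit_out:
  assumes "finite S" "set cs \<subseteq> S" "h permutes (S - set cs)" "x \<in> S - set cs"
  shows "orbit (cycle_of_list cs \<circ> h) x = orbit h x"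
proof (rule orbit_cong0[where A="S - set cs"])
  show "x \<in> S - set cs" by fact
  have hi: "h y \<in> S - set cs" if "y \<in> S - set cs" for y
    using permutes_in_image[OF assms(3)] that by blast
  show "\<And>y. y \<in> S - set cs \<Longrightarrow> (cycle_of_list cs \<circ> h) y = h y"
    using comp_out(1)[OF assms(2,3)] by blast
  then show "cycle_of_list cs \<circ> h \<in> S - set cs \<rightarrow> S - set cs"
    using hi by auto
qed

lemma comp_sign:
  assumes "distinct cs" "finite S" "set cs \<subseteq> S" "h permutes (S - set cs)"
  shows "sign (cycle_of_list cs \<circ> h) = (-1) ^ (length cs - 1) * sign h"
proof -
  have "permutation h" using assms permutation_permutes by (metis finite_Diff)
  then show ?thesis using sign_compose[OF permutation_of_cycle \<open>permutation h\<close>, of cs] sign_cycle[OF assms(1)] by simp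
qed


lemma comp_ext:
  assumes "cs \<in> CL S a" "h permutes (S - set cs)"
  shows "ext a (cycle_of_list cs \<circ> h) = cs"
proof -
  let ?g = "cycle_of_list cs \<circ> h"
  have d: "distinct cs" and sub: "set cs \<subseteq> S" and ne: "cs \<noteq> []" and hd: "hd cs = a"
    using assms(1) by (auto simp: CL_def)
  have a: "a = cs ! 0" using hd ne by (simp add: hd_conv_nth)
  have aset: "a \<in> set cs" using hd ne by auto
  have "card (orbit ?g a) = length cs"
    using comp_orbit_in[OF d sub assms(2) aset] d by (simp add: distinct_card)
  moreover have "(?g ^^ i) a = cs ! i" if "i < length cs" for i
  proof -
    have ci: "cycle_of_list cs y \<in> set cs" if "y \<in> set cs" for y
      using permutes_in_image[OF cycle_permutes[of cs]] that by blast
    have "(?g ^^ i) a = (cycle_of_list cs ^^ i) a \<and> (cycle_of_list cs ^^ i) a \<in> set cs"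
      by (rule funpow_agree[where T="set cs" and g="?g" and p="cycle_of_list cs", OF comp_in[OF sub assms(2)]])
        (simp_all add: ci aset)
    then have "(?g ^^ i) a = (cycle_of_list cs ^^ i) a" by blast
    also have "\<dots> = cs ! i" using cycle_funpow_nth[OF d, of 0 i] ne that a by simp
    finally show ?thesis .
  qed
  ultimately show ?thesis unfolding ext_def
    by (intro nth_equalityI) (simp_all del: upt_Suc)
qed

lemma comp_restr:
  assumes "set cs \<subseteq> S" "h permutes (S - set cs)"
  shows "perm_restrict (cycle_of_list cs \<circ> h) (S - set cs) = h"
proof
  fix x show "perm_restrict (cycle_of_list cs \<circ> h) (S - set cs) x = h x"
  proof (cases "x \<in> S - set cs")
    case True then show ?thesis using comp_out[OF assms] by (simp add: perm_restrict_simps)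
  next
    case False then show ?thesis using assms by (simp add: perm_restrict_simps permutes_not_in)
  qed
qed

lemma ext_props:
  assumes "g permutes S" "finite S" "a \<in> S"
  shows "ext a g \<in> CL S a" "set (ext a g) = orbit g a"
    "perm_restrict g (S - set (ext a g)) permutes (S - set (ext a g))"
    "g = cycle_of_list (ext a g) \<circ> perm_restrict g (S - set (ext a g))"
proof -
  have perm: "permutation g" using assms permutation_permutes by blast
  have self: "a \<in> orbit g a" by (rule permutation_self_in_orbit[OF perm])
  define k where "k = funpow_dist1 g a a"
  have orb: "orbit g a = (\<lambda>n. (g ^^ n) a) ` {0..<k}"
    unfolding k_def by (rule orbit_conv_funpow_dist1[OF self])
  have inj: "inj_on (\<lambda>n. (g ^^ n) a) {0..<k}" unfolding k_def by (rule inj_on_funpow_dist1[OF self])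
  have cardk: "card (orbit g a) = k" using orb inj by (simp add: card_image)
  have gk: "(g ^^ k) a = a" unfolding k_def by (rule funpow_dist1_prop[OF self])
  have kpos: "k > 0" unfolding k_def by simp
  have e: "ext a g = map (\<lambda>i. (g ^^ i) a) [0..<k]" by (simp add: ext_def cardk)
  show set_e: "set (ext a g) = orbit g a" using orb e by simp
  have dist: "distinct (ext a g)" using e inj by (simp add: distinct_map)
  have sub: "orbit g a \<subseteq> S" by (rule permutes_orbit_subset[OF assms(1,3)])
  have ne: "ext a g \<noteq> []" using e kpos by simp
  have "hd (ext a g) = a" using e kpos by (simp add: hd_map upt_conv_Cons del: upt_Suc)
  then show "ext a g \<in> CL S a" unfolding CL_def using dist set_e sub ne by simp
  have cyc: "cyclic_on g (orbit g a)" by (rule cyclic_on_orbit[OF assms(1,2)])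
  show hp: "perm_restrict g (S - set (ext a g)) permutes (S - set (ext a g))"
    unfolding set_e by (rule perm_restrict_diff_cyclic[OF assms(1) cyc])
  let ?cs = "ext a g" and ?h = "perm_restrict g (S - set (ext a g))"
  have subc: "set ?cs \<subseteq> S" using set_e sub by simp
  show "g = cycle_of_list ?cs \<circ> ?h"
  proof
    fix x show "g x = (cycle_of_list ?cs \<circ> ?h) x"
    proof (cases "x \<in> set ?cs")
      case True
      then obtain i where i: "i < k" "x = (g ^^ i) a" using e by auto
      have lenk: "length ?cs = k" using e by simp
      have xi: "x = ?cs ! i" using i e by simp
      have "(cycle_of_list ?cs \<circ> ?h) x = cycle_of_list ?cs x" using comp_in[OF subc hp True] .
      also have "\<dots> = (cycle_of_list ?cs ^^ 1) (?cs ! i)" using xi by simp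
      also have "\<dots> = ?cs ! ((1 + i) mod k)" using cycle_funpow_nth[OF dist, of i 1] i lenk by simp
      also have "\<dots> = (g ^^ ((1 + i) mod k)) a" using e kpos by simp
      also have "\<dots> = (g ^^ (1 + i)) a" using funpow_mod_eq[OF gk] by simp
      also have "\<dots> = g x" using i by simp
      finally show ?thesis by simp
    next
      case False
      have "(cycle_of_list ?cs \<circ> ?h) x = ?h x" using comp_out(1)[OF subc hp False] .
      also have "\<dots> = g x"
      proof (cases "x \<in> S")
        case True then show ?thesis using False by (simp add: perm_restrict_simps)
      next
        case F2: False then show ?thesis using False assms(1) by (simp add: perm_restrict_simps permutes_not_in)
      qed
      finally show ?thesis by simp
    qed
  qed
qed

lemma finite_CL: "finite S \<Longrightarrow> finite (CL S a)"
proof -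
  assume fS: "finite S"
  have "CL S a \<subseteq> {xs. set xs \<subseteq> S \<and> length xs \<le> card S}"
  proof
    fix xs assume "xs \<in> CL S a"
    then have "distinct xs" "set xs \<subseteq> S" by (auto simp: CL_def)
    then have "length xs = card (set xs)" by (simp add: distinct_card)
    also have "\<dots> \<le> card S" using card_mono[OF fS \<open>set xs \<subseteq> S\<close>] .
    finally show "xs \<in> {xs. set xs \<subseteq> S \<and> length xs \<le> card S}"
      using \<open>set xs \<subseteq> S\<close> by simp
  qed
  then show ?thesis by (rule finite_subset[OF _ finite_lists_length_le[OF fS]])
qed

lemma decomp_sum:
  fixes F :: "('a \<Rightarrow> 'a) \<Rightarrow> real"
  assumes fS: "finite S" and aS: "a \<in> S"
  shows "(\<Sum>g\<in>{g. g permutes S}. F g)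
     = (\<Sum>cs\<in>CL S a. \<Sum>h\<in>{h. h permutes (S - set cs)}. F (cycle_of_list cs \<circ> h))"
proof -
  let ?X = "SIGMA cs:CL S a. {h. h permutes (S - set cs)}"
  let ?f = "\<lambda>(cs, h). cycle_of_list cs \<circ> h"
  have bij: "bij_betw ?f ?X {g. g permutes S}"
  proof (rule bij_betwI')
    fix x y assume x: "x \<in> ?X" and y: "y \<in> ?X"
    obtain cs h where xe: "x = (cs, h)" and cs: "cs \<in> CL S a" and h: "h permutes (S - set cs)"
      using x by auto
    obtain cs' h' where ye: "y = (cs', h')" and cs': "cs' \<in> CL S a" and h': "h' permutes (S - set cs')"
      using y by auto
    have sub: "set cs \<subseteq> S" "set cs' \<subseteq> S" using cs cs' by (auto simp: CL_def)
    show "(?f x = ?f y) = (x = y)"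
    proof
      assume eq: "?f x = ?f y"
      then have eq2: "cycle_of_list cs \<circ> h = cycle_of_list cs' \<circ> h'" using xe ye by simp
      have "cs = ext a (cycle_of_list cs \<circ> h)" using comp_ext[OF cs h] by simp
      also have "\<dots> = ext a (cycle_of_list cs' \<circ> h')" using eq2 by simp
      also have "\<dots> = cs'" by (rule comp_ext[OF cs' h'])
      finally have ceq: "cs = cs'" .
      have "h = perm_restrict (cycle_of_list cs \<circ> h) (S - set cs)" using comp_restr[OF sub(1) h] by simp
      also have "\<dots> = perm_restrict (cycle_of_list cs' \<circ> h') (S - set cs')" using eq2 ceq by simp
      also have "\<dots> = h'" by (rule comp_restr[OF sub(2) h'])
      finally have "h = h'" .
      then show "x = y" using xe ye ceq by simp
    qed simp
  next
    fix x assume "x \<in> ?X"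
    then obtain cs h where xe: "x = (cs, h)" and cs: "cs \<in> CL S a" and h: "h permutes (S - set cs)"
      by auto
    have "set cs \<subseteq> S" using cs by (auto simp: CL_def)
    then show "?f x \<in> {g. g permutes S}" using comp_permutes h xe by simp
  next
    fix g assume "g \<in> {g. g permutes S}"
    then have g: "g permutes S" by simp
    let ?cs = "ext a g" and ?h = "perm_restrict g (S - set (ext a g))"
    have "(?cs, ?h) \<in> ?X" using ext_props(1,3)[OF g fS aS] by simp
    moreover have "g = ?f (?cs, ?h)" using ext_props(4)[OF g fS aS] by simp
    ultimately show "\<exists>x\<in>?X. g = ?f x" by blast
  qed
  have "(\<Sum>cs\<in>CL S a. \<Sum>h\<in>{h. h permutes (S - set cs)}. F (cycle_of_list cs \<circ> h))
      = (\<Sum>(cs, h)\<in>?X. F (cycle_of_list cs \<circ> h))"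
  proof (rule sum.Sigma)
    show "finite (CL S a)" by (rule finite_CL[OF fS])
    show "\<forall>cs\<in>CL S a. finite {h. h permutes S - set cs}"
      using finite_permutations fS by blast
  qed
  also have "\<dots> = (\<Sum>x\<in>?X. F (?f x))" by (intro sum.cong) auto
  also have "\<dots> = (\<Sum>g\<in>{g. g permutes S}. F g)" by (rule sum.reindex_bij_betw[OF bij])
  finally show ?thesis by simp
qed

definition nod :: "nat \<Rightarrow> 'a set \<Rightarrow> ('a \<Rightarrow> 'a) \<Rightarrow> bool" where
  "nod d T p \<longleftrightarrow> (\<forall>x\<in>T. card (orbit p x) \<noteq> d)"

definition wt :: "bool \<Rightarrow> ('a \<Rightarrow> 'a) \<Rightarrow> real" where
  "wt b g = (if b then real_of_int (sign g) else 1)"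

definition eps :: "bool \<Rightarrow> nat \<Rightarrow> real" where
  "eps b k = (if b then (-1) ^ (k - 1) else 1)"

lemma eps_F: "eps False k = 1" by (simp add: eps_def)
lemma eps_T: "eps True k = (-1) ^ (k - 1)" by (simp add: eps_def)

lemma comp_nod:
  assumes "finite S" "cs \<in> CL S a" "h permutes (S - set cs)"
  shows "nod d S (cycle_of_list cs \<circ> h) \<longleftrightarrow> length cs \<noteq> d \<and> nod d (S - set cs) h"
proof -
  have d: "distinct cs" and sub: "set cs \<subseteq> S" and ne: "cs \<noteq> []"
    using assms(2) by (auto simp: CL_def)
  have in_c: "card (orbit (cycle_of_list cs \<circ> h) x) = length cs" if "x \<in> set cs" for x
    using comp_orbit_in[OF d sub assms(3) that] d by (simp add: distinct_card)
  have out_c: "orbit (cycle_of_list cs \<circ> h) x = orbit h x" if "x \<in> S - set cs" for x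
    using comp_orbit_out[OF assms(1) sub assms(3) that] .
  obtain x0 where x0: "x0 \<in> set cs" using ne by (cases cs) auto
  show ?thesis
  proof
    assume A: "nod d S (cycle_of_list cs \<circ> h)"
    have "length cs \<noteq> d" using A x0 sub in_c unfolding nod_def by force
    moreover have "nod d (S - set cs) h" using A out_c unfolding nod_def by auto
    ultimately show "length cs \<noteq> d \<and> nod d (S - set cs) h" by simp
  next
    assume B: "length cs \<noteq> d \<and> nod d (S - set cs) h"
    show "nod d S (cycle_of_list cs \<circ> h)" unfolding nod_def
    proof
      fix x assume "x \<in> S"
      show "card (orbit (cycle_of_list cs \<circ> h) x) \<noteq> d"
      proof (cases "x \<in> set cs")
        case True then show ?thesis using in_c B by simp
      next
        case False then have "x \<in> S - set cs" using \<open>x \<in> S\<close> by simp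
        then show ?thesis using out_c B unfolding nod_def by simp
      qed
    qed
  qed
qed

lemma comp_wt:
  assumes "finite S" "cs \<in> CL S a" "h permutes (S - set cs)"
  shows "wt b (cycle_of_list cs \<circ> h) = eps b (length cs) * wt b h"
proof -
  have d: "distinct cs" and sub: "set cs \<subseteq> S"
    using assms(2) by (auto simp: CL_def)
  show ?thesis using comp_sign[OF d assms(1) sub assms(3)] by (simp add: wt_def eps_def)
qed

lemma prod_fact_real:
  assumes "k \<le> n"
  shows "real (\<Prod>{n - k + 1..n}) * fact (n - k) = fact n"
proof -
  have "fact n = fact (n - k) * \<Prod>{Suc (n - k)..n}"
    by (rule fact_eq_fact_times) simp
  then have "(fact n :: nat) = fact (n - k) * \<Prod>{n - k + 1..n}" by simp
  then have "real (fact n :: nat) = real (fact (n - k) * \<Prod>{n - k + 1..n})" by simp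
  then show ?thesis by (simp add: of_nat_fact)
qed

lemma CL_Cons: "CL S a = (\<lambda>ys. a # ys) ` {ys. distinct ys \<and> set ys \<subseteq> S - {a}} \<or> a \<notin> S"
proof (cases "a \<in> S")
  case True
  have "CL S a = (\<lambda>ys. a # ys) ` {ys. distinct ys \<and> set ys \<subseteq> S - {a}}"
  proof (intro set_eqI iffI)
    fix xs assume "xs \<in> CL S a"
    then obtain ys where "xs = a # ys" "distinct (a # ys)" "set (a#ys) \<subseteq> S"
      unfolding CL_def by (cases xs) auto
    then show "xs \<in> (\<lambda>ys. a # ys) ` {ys. distinct ys \<and> set ys \<subseteq> S - {a}}" by auto
  next
    fix xs assume "xs \<in> (\<lambda>ys. a # ys) ` {ys. distinct ys \<and> set ys \<subseteq> S - {a}}"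
    then show "xs \<in> CL S a" using True unfolding CL_def by auto
  qed
  then show ?thesis by simp
qed simp

theorem W_formula:
  fixes cl :: "nat \<Rightarrow> real" and b :: bool and d :: nat
  assumes cl0: "cl 0 = 1"
    and clrec: "\<And>m. m \<ge> 1 \<Longrightarrow> real m * cl m
        = (\<Sum>k<m. (if Suc k = d then 0 else eps b (Suc k)) * cl (m - Suc k))"
  shows "finite (S :: 'a set) \<Longrightarrow>
     (\<Sum>g\<in>{g. g permutes S \<and> nod d S g}. wt b g) = fact (card S) * cl (card S)"
proof (induction "card S" arbitrary: S rule: less_induct)
  case less
  show ?case
  proof (cases "S = {}")
    case True
    have "{g. g permutes S \<and> nod d S g} = {id}" using True by (auto simp: nod_def)
    then show ?thesis using True cl0 by (simp add: wt_def)
  next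
    case False
    then obtain a where aS: "a \<in> S" by blast
    define m where "m = card S"
    have fS: "finite S" by fact
    have m1: "m \<ge> 1" using False fS m_def by (simp add: Suc_le_eq card_gt_0_iff)
    define \<phi> where "\<phi> k = (if k = d then 0 else eps b k * (fact (m - k) * cl (m - k)))" for k
    define Y where "Y = {ys. distinct ys \<and> set ys \<subseteq> S - {a}}"
    have cardSa: "card (S - {a}) = m - 1" using aS fS m_def by simp
    have "(\<Sum>g\<in>{g. g permutes S \<and> nod d S g}. wt b g)
        = (\<Sum>g\<in>{g. g permutes S}. (if nod d S g then wt b g else 0))"
    proof -
      have "{g. g permutes S \<and> nod d S g} = {g \<in> {g. g permutes S}. nod d S g}" by simp
      then show ?thesis using sum.inter_filter[OF finite_permutations[OF fS]] by simp
    qed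
    also have "\<dots> = (\<Sum>cs\<in>CL S a. \<Sum>h\<in>{h. h permutes (S - set cs)}.
                 (if nod d S (cycle_of_list cs \<circ> h) then wt b (cycle_of_list cs \<circ> h) else 0))"
      by (rule decomp_sum[OF fS aS])
    also have "\<dots> = (\<Sum>cs\<in>CL S a. \<phi> (length cs))"
    proof (rule sum.cong[OF refl])
      fix cs assume cs: "cs \<in> CL S a"
      have sub: "set cs \<subseteq> S" and dcs: "distinct cs" using cs by (auto simp: CL_def)
      have cardT: "card (S - set cs) = m - length cs"
        using sub dcs fS m_def by (simp add: card_Diff_subset distinct_card)
      have "cs \<noteq> []" using cs by (simp add: CL_def)
      then have lt: "card (S - set cs) < card S"
        using cardT m1 m_def by (simp add: diff_less)
      have "(\<Sum>h\<in>{h. h permutes (S - set cs)}.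
                 (if nod d S (cycle_of_list cs \<circ> h) then wt b (cycle_of_list cs \<circ> h) else 0))
          = (\<Sum>h\<in>{h. h permutes (S - set cs)}.
                 (if length cs = d then 0 else eps b (length cs) * (if nod d (S - set cs) h then wt b h else 0)))"
        by (rule sum.cong[OF refl]) (simp add: comp_nod[OF fS cs] comp_wt[OF fS cs])
      also have "\<dots> = (if length cs = d then 0 else eps b (length cs) *
            (\<Sum>h\<in>{h. h permutes (S - set cs)}. (if nod d (S - set cs) h then wt b h else 0)))"
        by (simp add: sum_distrib_left)
      also have "(\<Sum>h\<in>{h. h permutes (S - set cs)}. (if nod d (S - set cs) h then wt b h else 0))
          = (\<Sum>h\<in>{h. h permutes (S - set cs) \<and> nod d (S - set cs) h}. wt b h)"
      proof -
        have "{h. h permutes (S - set cs) \<and> nod d (S - set cs) h}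
              = {h \<in> {h. h permutes (S - set cs)}. nod d (S - set cs) h}" by simp
        moreover have "finite (S - set cs)" using fS by simp
        then have "sum (wt b) {x \<in> {p. p permutes (S - set cs)}. nod d (S - set cs) x}
           = (\<Sum>x\<in>{p. p permutes (S - set cs)}. if nod d (S - set cs) x then wt b x else 0)"
          by (intro sum.inter_filter finite_permutations)
        then show ?thesis by simp
      qed
      also have "\<dots> = fact (card (S - set cs)) * cl (card (S - set cs))"
        using less.hyps[OF lt] fS by simp
      finally show "(\<Sum>h\<in>{h. h permutes (S - set cs)}.
                 (if nod d S (cycle_of_list cs \<circ> h) then wt b (cycle_of_list cs \<circ> h) else 0))
           = \<phi> (length cs)" unfolding \<phi>_def cardT[symmetric] .
    qed
    also have "\<dots> = (\<Sum>ys\<in>Y. \<phi> (Suc (length ys)))"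
    proof -
      have "CL S a = (\<lambda>ys. a # ys) ` Y" using CL_Cons[of S a] aS Y_def by simp
      moreover have "inj_on (\<lambda>ys. a # ys) Y" by (rule inj_onI) simp
      ultimately show ?thesis by (simp add: sum.reindex)
    qed
    also have "\<dots> = (\<Sum>k<m. \<Sum>ys\<in>{ys. ys \<in> Y \<and> length ys = k}. \<phi> (Suc (length ys)))"
    proof (rule sum.group[symmetric])
      show "finite Y" unfolding Y_def
      proof (rule finite_subset[OF _ finite_lists_length_le[of "S - {a}" "card (S - {a})"]])
        show "{ys. distinct ys \<and> set ys \<subseteq> S - {a}} \<subseteq> {xs. set xs \<subseteq> S - {a} \<and> length xs \<le> card (S - {a})}"
          using fS by (auto simp: card_mono distinct_card[symmetric])
      qed (use fS in simp)
      show "finite {..<m}" by simp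
      show "length ` Y \<subseteq> {..<m}"
      proof
        fix k assume "k \<in> length ` Y"
        then obtain ys where "ys \<in> Y" "k = length ys" by blast
        then have "k = card (set ys)" "set ys \<subseteq> S - {a}" unfolding Y_def by (auto simp: distinct_card)
        then have "k \<le> m - 1" using card_mono[of "S - {a}" "set ys"] fS cardSa by simp
        then show "k \<in> {..<m}" using m1 by simp
      qed
    qed
    also have "\<dots> = (\<Sum>k<m. fact (m - 1) * ((if Suc k = d then 0 else eps b (Suc k)) * cl (m - Suc k)))"
    proof (rule sum.cong[OF refl])
      fix k assume "k \<in> {..<m}"
      then have km: "k \<le> m - 1" by simp
      have "{ys. ys \<in> Y \<and> length ys = k} = {xs. length xs = k \<and> distinct xs \<and> set xs \<subseteq> S - {a}}"
        unfolding Y_def by auto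
      then have cY: "card {ys. ys \<in> Y \<and> length ys = k} = \<Prod>{m - 1 - k + 1..m - 1}"
        using card_lists_distinct_length_eq[of "S - {a}" k] fS cardSa km by simp
      have "(\<Sum>ys\<in>{ys. ys \<in> Y \<and> length ys = k}. \<phi> (Suc (length ys)))
          = real (card {ys. ys \<in> Y \<and> length ys = k}) * \<phi> (Suc k)" by simp
      also have "\<dots> = real (\<Prod>{m - 1 - k + 1..m - 1}) * \<phi> (Suc k)" using cY by simp
      also have "\<dots> = (real (\<Prod>{m - 1 - k + 1..m - 1}) * fact (m - 1 - k)) *
                        ((if Suc k = d then 0 else eps b (Suc k)) * cl (m - Suc k))"
        unfolding \<phi>_def by (simp add: algebra_simps)
      also have "\<dots> = fact (m - 1) * ((if Suc k = d then 0 else eps b (Suc k)) * cl (m - Suc k))"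
        using prod_fact_real[OF km] by simp
      finally show "(\<Sum>ys\<in>{ys. ys \<in> Y \<and> length ys = k}. \<phi> (Suc (length ys)))
          = fact (m - 1) * ((if Suc k = d then 0 else eps b (Suc k)) * cl (m - Suc k))" .
    qed
    also have "\<dots> = fact (m - 1) * (real m * cl m)"
      by (simp add: sum_distrib_left[symmetric] clrec[OF m1])
    also have "\<dots> = fact m * cl m" using fact_reduce[of m, where 'a=real] m1 by simp
    finally show ?thesis unfolding m_def .
  qed
qed



lemma split_rec:
  fixes \<epsilon> f :: "nat \<Rightarrow> real"
  assumes d1: "d \<ge> 1"
  shows "(\<Sum>k<m. (if Suc k = d then 0 else \<epsilon> (Suc k)) * f (m - Suc k))
       = (\<Sum>k<m. \<epsilon> (Suc k) * f (m - Suc k)) - (if d \<le> m then \<epsilon> d * f (m - d) else 0)"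
proof -
  have "(\<Sum>k<m. (if Suc k = d then 0 else \<epsilon> (Suc k)) * f (m - Suc k))
      = (\<Sum>k<m. \<epsilon> (Suc k) * f (m - Suc k) - (if k = d - 1 then \<epsilon> (Suc k) * f (m - Suc k) else 0))"
    using d1 by (intro sum.cong) auto
  also have "\<dots> = (\<Sum>k<m. \<epsilon> (Suc k) * f (m - Suc k)) - (\<Sum>k<m. (if k = d - 1 then \<epsilon> (Suc k) * f (m - Suc k) else 0))"
    by (rule sum_subtractf)
  also have "(\<Sum>k<m. (if k = d - 1 then \<epsilon> (Suc k) * f (m - Suc k) else 0)) = (if d \<le> m then \<epsilon> d * f (m - d) else 0)"
  proof -
    have "(d - 1 < m) = (d \<le> m)" using d1 by arith
    moreover have "Suc (d - 1) = d" using d1 by simp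
    ultimately show ?thesis by simp
  qed
  finally show ?thesis .
qed

section \<open>Counting closed form\<close>

definition tt :: "nat \<Rightarrow> nat \<Rightarrow> real" where "tt d j = (- 1 / real d) ^ j / fact j"
definition ee :: "nat \<Rightarrow> nat \<Rightarrow> real" where "ee d l = (if d dvd l then tt d (l div d) else 0)"
definition qq :: "nat \<Rightarrow> nat \<Rightarrow> real" where "qq d m = (\<Sum>l\<le>m. ee d l)"
definition UU :: "nat \<Rightarrow> nat \<Rightarrow> real" where "UU d j = (\<Sum>k\<le>j. tt d k)"

lemma fact_step_real:
  fixes x :: real
  shows "real (Suc j) * (x ^ Suc j / fact (Suc j)) = x * (x ^ j / fact j)"
proof -
  have "fact (Suc j) = real (Suc j) * (fact j :: real)" by (simp add: fact_Suc del: of_nat_Suc)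
  moreover have "real (Suc j) \<noteq> 0" by simp
  moreover have "(fact j :: real) \<noteq> 0" by simp
  ultimately show ?thesis by (simp add: field_simps del: of_nat_Suc)
qed

lemma qq_0: "qq d 0 = 1" by (simp add: qq_def ee_def tt_def)

lemma l_ee:
  assumes d1: "d \<ge> 1"
  shows "real l * ee d l = (if d \<le> l then - ee d (l - d) else 0)"
proof (cases "d dvd l")
  case True
  then obtain j where l: "l = d * j" by blast
  show ?thesis
  proof (cases j)
    case 0 then show ?thesis using l d1 by simp
  next
    case (Suc j')
    have dl: "d \<le> l" using l Suc d1 by simp
    have ldd: "l - d = d * j'" using l Suc by (simp add: algebra_simps)
    have ee: "ee d l = tt d (Suc j')" using l Suc d1 by (simp add: ee_def)
    have rl: "real l = real d * real (Suc j')" using l Suc by (simp add: algebra_simps)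
    have "real l * ee d l = real d * (real (Suc j') * ((- 1 / real d) ^ Suc j' / fact (Suc j')))"
      by (simp only: ee tt_def rl mult.assoc)
    also have "\<dots> = (real d * (- 1 / real d)) * ((- 1 / real d) ^ j' / fact j')"
      by (simp only: fact_step_real mult.assoc)
    also have "\<dots> = - ((- 1 / real d) ^ j' / fact j')"
      using d1 by simp
    also have "\<dots> = - ee d (l - d)" using ldd d1 by (simp add: ee_def tt_def)
    finally show ?thesis using dl by simp
  qed
next
  case False
  then have "\<not> d dvd (l - d)" if "d \<le> l" using that by (metis dvd_add_triv_right_iff le_add_diff_inverse2)
  then show ?thesis using False by (simp add: ee_def)
qed

lemma sum_qq_lt: "(\<Sum>p<m. qq d p) = real m * qq d m - (\<Sum>l\<le>m. real l * ee d l)"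
proof (induction m)
  case 0 then show ?case by simp
next
  case (Suc m)
  have "qq d (Suc m) = qq d m + ee d (Suc m)" by (simp add: qq_def)
  then show ?case using Suc by (simp add: algebra_simps)
qed

lemma sum_shift_ee:
  assumes d1: "d \<ge> 1"
  shows "(\<Sum>l\<le>m. (if d \<le> l then ee d (l - d) else 0)) = (if d \<le> m then qq d (m - d) else 0)"
proof (induction m)
  case 0 then show ?case using d1 by simp
next
  case (Suc m)
  show ?case
  proof (cases "d \<le> m")
    case True
    then have "Suc m - d = Suc (m - d)" by simp
    then show ?thesis using Suc True by (simp add: qq_def)
  next
    case False
    show ?thesis
    proof (cases "d = Suc m")
      case True then show ?thesis using Suc False by (simp add: qq_def)
    next
      case F2: False then show ?thesis using Suc False by simp
    qed
  qed
qed

lemma qq_rec: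
  assumes d1: "d \<ge> 1"
  shows "real m * qq d m = (\<Sum>k<m. (if Suc k = d then 0 else (1::real)) * qq d (m - Suc k))"
proof -
  have "(\<Sum>k<m. (if Suc k = d then 0 else (1::real)) * qq d (m - Suc k))
      = (\<Sum>k<m. 1 * qq d (m - Suc k)) - (if d \<le> m then 1 * qq d (m - d) else 0)"
    using split_rec[OF d1, where \<epsilon>="\<lambda>_. 1" and m=m and f="qq d"] by simp
  also have "(\<Sum>k<m. 1 * qq d (m - Suc k)) = (\<Sum>p<m. qq d p)"
    using sum.nat_diff_reindex[of "qq d" m] by simp
  also have "\<dots> = real m * qq d m - (\<Sum>l\<le>m. real l * ee d l)" by (rule sum_qq_lt)
  also have "(\<Sum>l\<le>m. real l * ee d l) = (\<Sum>l\<le>m. - (if d \<le> l then ee d (l - d) else 0))"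
    by (rule sum.cong[OF refl]) (simp add: l_ee[OF d1])
  also have "\<dots> = - (\<Sum>l\<le>m. (if d \<le> l then ee d (l - d) else 0))"
    by (simp add: sum_negf)
  also have "\<dots> = - (if d \<le> m then qq d (m - d) else 0)" using sum_shift_ee[OF d1] by simp
  finally show ?thesis by simp
qed

lemma qq_UU:
  assumes d1: "d \<ge> 1"
  shows "qq d m = UU d (m div d)"
proof (induction m)
  case 0 then show ?case by (simp add: qq_def UU_def ee_def)
next
  case (Suc m)
  have q: "qq d (Suc m) = qq d m + ee d (Suc m)" by (simp add: qq_def)
  show ?case
  proof (cases "d dvd Suc m")
    case True
    then have "Suc m div d = Suc (m div d)" using div_Suc[of m d] by simp
    then show ?thesis using q Suc True by (simp add: UU_def ee_def)
  next
    case False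
    then have "Suc m div d = m div d" using div_Suc[of m d] by (simp add: dvd_eq_mod_eq_0)
    then show ?thesis using q Suc False by (simp add: ee_def)
  qed
qed

section \<open>Signed closed form\<close>

definition cc :: "nat \<Rightarrow> nat \<Rightarrow> real" where
  "cc d l = (if d dvd l then ((-1) ^ d / real d) ^ (l div d) / fact (l div d) else 0)"
definition rr :: "nat \<Rightarrow> nat \<Rightarrow> real" where
  "rr d m = cc d m + (if m = 0 then 0 else cc d (m - 1))"

lemma rr_0: "rr d 0 = 1" by (simp add: rr_def cc_def)

lemma l_cc:
  assumes d1: "d \<ge> 1"
  shows "real l * cc d l = (if d \<le> l then (-1) ^ d * cc d (l - d) else 0)"
proof (cases "d dvd l")
  case True
  then obtain j where l: "l = d * j" by blast
  show ?thesis
  proof (cases j)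
    case 0 then show ?thesis using l d1 by simp
  next
    case (Suc j')
    have dl: "d \<le> l" using l Suc d1 by simp
    have ldd: "l - d = d * j'" using l Suc by (simp add: algebra_simps)
    have cc: "cc d l = ((-1) ^ d / real d) ^ Suc j' / fact (Suc j')" using l Suc d1 by (simp add: cc_def)
    have rl: "real l = real d * real (Suc j')" using l Suc by (simp add: algebra_simps)
    have "real l * cc d l = real d * (real (Suc j') * (((-1) ^ d / real d) ^ Suc j' / fact (Suc j')))"
      by (simp only: cc rl mult.assoc)
    also have "\<dots> = (real d * ((-1) ^ d / real d)) * (((-1) ^ d / real d) ^ j' / fact j')"
      by (simp only: fact_step_real mult.assoc)
    also have "\<dots> = (-1) ^ d * (((-1) ^ d / real d) ^ j' / fact j')"
      using d1 by simp
    also have "\<dots> = (-1) ^ d * cc d (l - d)" using ldd d1 by (simp add: cc_def)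
    finally show ?thesis using dl by simp
  qed
next
  case False
  then have "\<not> d dvd (l - d)" if "d \<le> l" using that by (metis dvd_add_triv_right_iff le_add_diff_inverse2)
  then show ?thesis using False by (simp add: cc_def)
qed

lemma BB_rr: "(\<Sum>k<m. (-1) ^ k * rr d (m - Suc k)) = (if m = 0 then 0 else cc d (m - 1))"
proof (induction m)
  case 0 then show ?case by simp
next
  case (Suc m)
  have "(\<Sum>k<Suc m. (-1) ^ k * rr d (Suc m - Suc k)) = rr d m + (\<Sum>k<m. (-1) ^ Suc k * rr d (m - Suc k))"
    by (simp only: sum.lessThan_Suc_shift) simp
  also have "\<dots> = rr d m - (\<Sum>k<m. (-1) ^ k * rr d (m - Suc k))"
    by (simp add: sum_negf)
  finally show ?case using Suc by (simp add: rr_def)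
qed

lemma rr_rec:
  assumes d1: "d \<ge> 1"
  shows "real m * rr d m = (\<Sum>k<m. (if Suc k = d then 0 else (-1::real) ^ (Suc k - 1)) * rr d (m - Suc k))"
proof -
  have "(\<Sum>k<m. (if Suc k = d then 0 else (-1::real) ^ (Suc k - 1)) * rr d (m - Suc k))
      = (\<Sum>k<m. (-1) ^ (Suc k - 1) * rr d (m - Suc k)) - (if d \<le> m then (-1) ^ (d - 1) * rr d (m - d) else 0)"
    using split_rec[OF d1, where \<epsilon>="\<lambda>k. (-1::real) ^ (k - 1)" and m=m and f="rr d"] by simp
  also have "(\<Sum>k<m. (-1::real) ^ (Suc k - 1) * rr d (m - Suc k)) = (if m = 0 then 0 else cc d (m - 1))"
    using BB_rr[where m=m and d=d] by simp
  finally have R: "(\<Sum>k<m. (if Suc k = d then 0 else (-1::real) ^ (Suc k - 1)) * rr d (m - Suc k))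
      = (if m = 0 then 0 else cc d (m - 1)) - (if d \<le> m then (-1) ^ (d - 1) * rr d (m - d) else 0)" .
  have sgn: "(-1::real) ^ (d - 1) = - ((-1) ^ d)"
  proof -
    obtain d' where "d = Suc d'" using d1 by (cases d) auto
    then show ?thesis by simp
  qed
  show ?thesis
  proof (cases "m = 0")
    case True then show ?thesis using R d1 by simp
  next
    case False
    have e1: "real m * cc d m = (if d \<le> m then (-1) ^ d * cc d (m - d) else 0)" by (rule l_cc[OF d1])
    have e2: "real (m - 1) * cc d (m - 1) = (if d \<le> m - 1 then (-1) ^ d * cc d (m - 1 - d) else 0)" by (rule l_cc[OF d1])
    have "real m * rr d m = real m * cc d m + real (m - 1) * cc d (m - 1) + cc d (m - 1)"
      using False by (simp add: rr_def algebra_simps of_nat_diff)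
    also have "\<dots> = cc d (m - 1) + (if d \<le> m then (-1) ^ d * rr d (m - d) else 0)"
      using e1 e2 False d1 by (auto simp: rr_def algebra_simps)
    finally show ?thesis using R False sgn by simp
  qed
qed



lemma tt_Suc: "UU d (Suc j) = UU d j + tt d (Suc j)" by (simp add: UU_def)

lemma tt_alt: "tt d k = (-1) ^ k * (1 / (real d ^ k * fact k))"
  unfolding tt_def power_divide by simp

lemma xx_mono:
  assumes d1: "d \<ge> 1"
  shows "1 / (real d ^ Suc k * fact (Suc k)) \<le> 1 / (real d ^ k * (fact k :: real))"
proof (rule divide_left_mono)
  have "real d ^ k * fact k \<le> real d ^ k * fact k * (real d * real (Suc k))"
  proof -
    have "1 * 1 \<le> real d * real (Suc k)" by (rule mult_mono) (use d1 in auto)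
    then have "1 \<le> real d * real (Suc k)" by simp
    moreover have "0 \<le> real d ^ k * fact k" by simp
    ultimately show ?thesis using mult_left_mono[of 1 "real d * real (Suc k)" "real d ^ k * fact k"] by simp
  qed
  also have "\<dots> = real d ^ Suc k * fact (Suc k)" by (simp add: fact_Suc del: of_nat_Suc)
  finally show "real d ^ k * fact k \<le> real d ^ Suc k * fact (Suc k)" .
  show "0 \<le> (1::real)" by simp
  show "0 < real d ^ Suc k * fact (Suc k) * (real d ^ k * fact k)" using d1 by simp
qed

lemma pair_dec:
  assumes d1: "d \<ge> 1"
  shows "tt d (Suc (2 * k)) + tt d (Suc (Suc (2 * k))) \<le> 0"
  using xx_mono[OF d1, of "Suc (2*k)"] by (simp add: tt_alt)

lemma pair_inc:
  assumes d1: "d \<ge> 1"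
  shows "tt d (Suc (Suc (2 * k))) + tt d (Suc (Suc (Suc (2 * k)))) \<ge> 0"
  using xx_mono[OF d1, of "Suc (Suc (2*k))"] by (simp add: tt_alt)

lemma odd_neg: "tt d (Suc (2 * k)) \<le> 0"
  by (simp add: tt_alt)

lemma E_dec:
  assumes d1: "d \<ge> 1"
  shows "decseq (\<lambda>k. UU d (2 * k))"
proof (rule decseq_SucI)
  fix k
  have "UU d (2 * Suc k) = UU d (2 * k) + (tt d (Suc (2 * k)) + tt d (Suc (Suc (2 * k))))"
    by (simp add: tt_Suc)
  then show "UU d (2 * Suc k) \<le> UU d (2 * k)" using pair_dec[OF d1, of k] by simp
qed

lemma O_inc:
  assumes d1: "d \<ge> 1"
  shows "incseq (\<lambda>k. UU d (Suc (2 * k)))"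
proof (rule incseq_SucI)
  fix k
  have "UU d (Suc (2 * Suc k)) = UU d (Suc (2 * k)) + (tt d (Suc (Suc (2 * k))) + tt d (Suc (Suc (Suc (2 * k)))))"
    by (simp add: tt_Suc)
  then show "UU d (Suc (2 * k)) \<le> UU d (Suc (2 * Suc k))" using pair_inc[OF d1, of k] by simp
qed

lemma O_le_E:
  assumes d1: "d \<ge> 1"
  shows "UU d (Suc (2 * k)) \<le> UU d (2 * l)"
proof -
  let ?M = "max k l"
  have "UU d (Suc (2 * k)) \<le> UU d (Suc (2 * ?M))" using O_inc[OF d1] by (simp add: incseq_def)
  also have "\<dots> \<le> UU d (2 * ?M)" using odd_neg[of d ?M] by (simp add: tt_Suc)
  also have "\<dots> \<le> UU d (2 * l)" using E_dec[OF d1] by (simp add: decseq_def)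
  finally show ?thesis .
qed

lemma UU_0: "UU d 0 = 1" by (simp add: UU_def tt_def)
lemma UU_1: "UU d 1 = 1 - 1 / real d" by (simp add: UU_def tt_def)
lemma UU_2: "UU d 2 = 1 - 1 / real d + 1 / (2 * real d ^ 2)"
  by (simp add: UU_def tt_def numeral_2_eq_2 power2_eq_square)

lemma UU_bounds:
  assumes d1: "d \<ge> 1"
  shows "UU d 1 \<le> UU d j" "UU d j \<le> 1"
    "j \<ge> 1 \<Longrightarrow> UU d j \<le> UU d 2" "j \<ge> 2 \<Longrightarrow> UU d 3 \<le> UU d j"
proof -
  obtain l where jl: "j = 2 * l \<or> j = Suc (2 * l)" by (metis dvd_mult_div_cancel odd_two_times_div_two_succ Suc_eq_plus1)
  have E0: "UU d (2 * 0) = 1" by (simp add: UU_0)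
  have O0: "UU d (Suc (2 * 0)) = UU d 1" by simp
  have E1: "UU d (2 * 1) = UU d 2" by simp
  have O1: "UU d (Suc (2 * 1)) = UU d 3" by simp
  have Edec: "l' \<le> l'' \<Longrightarrow> UU d (2 * l'') \<le> UU d (2 * l')" for l' l''
    using E_dec[OF d1] by (simp add: decseq_def)
  have Oinc: "l' \<le> l'' \<Longrightarrow> UU d (Suc (2 * l')) \<le> UU d (Suc (2 * l''))" for l' l''
    using O_inc[OF d1] by (simp add: incseq_def)
  show "UU d 1 \<le> UU d j"
    using jl O_le_E[OF d1, of 0 l] Oinc[of 0 l] by auto
  show "UU d j \<le> 1"
    using jl O_le_E[OF d1, of l 0] Edec[of 0 l] E0 by auto
  show "j \<ge> 1 \<Longrightarrow> UU d j \<le> UU d 2"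
  proof -
    assume j1: "j \<ge> 1"
    show ?thesis
    proof (cases "j = 2 * l")
      case True then have "l \<ge> 1" using j1 by simp
      then show ?thesis using True Edec[of 1 l] by simp
    next
      case False then have "j = Suc (2 * l)" using jl by simp
      then show ?thesis using O_le_E[OF d1, of l 1] by simp
    qed
  qed
  show "j \<ge> 2 \<Longrightarrow> UU d 3 \<le> UU d j"
  proof -
    assume j2: "j \<ge> 2"
    show ?thesis
    proof (cases "j = 2 * l")
      case True then show ?thesis using O_le_E[OF d1, of 1 l] by simp
    next
      case False then have "j = Suc (2 * l)" "l \<ge> 1" using jl j2 by auto
      then show ?thesis using Oinc[of 1 l] by simp
    qed
  qed
qed

lemma cauchy0:
  assumes d1: "d \<ge> 1"
  shows "(\<Sum>k\<le>n. 1 / (fact k * real d ^ k) * tt d (n - k)) = (if n = 0 then 1 else 0)"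
proof -
  have "(\<Sum>k\<le>n. 1 / (fact k * real d ^ k) * tt d (n - k))
      = (\<Sum>k\<le>n. of_nat (n choose k) * (1 / real d) ^ k * (- 1 / real d) ^ (n - k)) / fact n"
    unfolding sum_divide_distrib
  proof (rule sum.cong[OF refl])
    fix k assume "k \<in> {..n}"
    then have kn: "k \<le> n" by simp
    show "1 / (fact k * real d ^ k) * tt d (n - k)
        = of_nat (n choose k) * (1 / real d) ^ k * (- 1 / real d) ^ (n - k) / fact n"
      unfolding binomial_fact[OF kn] tt_def by (simp add: field_simps power_divide)
  qed
  also have "\<dots> = (1 / real d + - 1 / real d) ^ n / fact n" by (simp only: binomial_ring)
  also have "\<dots> = (if n = 0 then 1 else 0)" by simp
  finally show ?thesis .
qed

lemma conv_UU:
  assumes d1: "d \<ge> 1"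
  shows "(\<Sum>k\<le>j. 1 / (fact k * real d ^ k) * UU d (j - k)) = 1"
proof (induction j)
  case 0 then show ?case by (simp add: UU_0)
next
  case (Suc j)
  let ?a = "\<lambda>k. 1 / (fact k * real d ^ k)"
  have "(\<Sum>k\<le>Suc j. ?a k * UU d (Suc j - k)) = (\<Sum>k\<le>j. ?a k * UU d (Suc j - k)) + ?a (Suc j) * UU d 0"
    by simp
  also have "(\<Sum>k\<le>j. ?a k * UU d (Suc j - k)) = (\<Sum>k\<le>j. ?a k * UU d (j - k) + ?a k * tt d (Suc j - k))"
  proof (rule sum.cong[OF refl])
    fix k assume "k \<in> {..j}"
    then have "Suc j - k = Suc (j - k)" by simp
    then show "?a k * UU d (Suc j - k) = ?a k * UU d (j - k) + ?a k * tt d (Suc j - k)"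
      by (simp add: tt_Suc algebra_simps)
  qed
  also have "\<dots> = 1 + (\<Sum>k\<le>j. ?a k * tt d (Suc j - k))" using Suc by (simp add: sum.distrib)
  finally have "(\<Sum>k\<le>Suc j. ?a k * UU d (Suc j - k)) = 1 + ((\<Sum>k\<le>j. ?a k * tt d (Suc j - k)) + ?a (Suc j) * tt d 0)"
    by (simp add: UU_0 tt_def)
  also have "(\<Sum>k\<le>j. ?a k * tt d (Suc j - k)) + ?a (Suc j) * tt d 0 = (\<Sum>k\<le>Suc j. ?a k * tt d (Suc j - k))"
    by simp
  also have "\<dots> = 0" using cauchy0[OF d1, of "Suc j"] by simp
  finally show ?case by simp
qed

lemma aseq_UU:
  assumes d1: "d \<ge> 1"
  shows "aseq d j = 1 - UU d j"
proof (induction j rule: less_induct)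
  case (less j)
  show ?case
  proof (cases j)
    case 0 then show ?thesis by (simp add: UU_0)
  next
    case (Suc m)
    let ?a = "\<lambda>k. 1 / (fact k * real d ^ k)"
    have "aseq d (Suc m) = (\<Sum>k\<in>{1..Suc m}. ?a k * (1 - aseq d (Suc m - k)))" by simp
    also have "\<dots> = (\<Sum>k\<in>{1..Suc m}. ?a k * UU d (Suc m - k))"
    proof (rule sum.cong[OF refl])
      fix k assume "k \<in> {1..Suc m}"
      then have "Suc m - k < j" using Suc by auto
      then show "?a k * (1 - aseq d (Suc m - k)) = ?a k * UU d (Suc m - k)" using less by simp
    qed
    also have "\<dots> = (\<Sum>k\<le>Suc m. ?a k * UU d (Suc m - k)) - ?a 0 * UU d (Suc m)"
      by (simp add: atMost_atLeast0 sum.atLeast_Suc_atMost)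
    also have "\<dots> = 1 - UU d (Suc m)" using conv_UU[OF d1, of "Suc m"] by simp
    finally show ?thesis using Suc by simp
  qed
qed



lemma nat_key:
  fixes i d :: nat
  assumes "2 \<le> i" "2 \<le> d"
  shows "4 * (i + 1) * d \<le> 3 * fact i * d ^ i"
  using assms(1)
proof (induction i rule: nat_induct_at_least)
  case base
  have "12 * d \<le> 6 * (d * d)" using assms(2) by simp
  then show ?case by (simp add: power2_eq_square numeral_2_eq_2)
next
  case (Suc i)
  have X: "4 * (i + 1) * d \<le> 3 * fact i * d ^ i" by (rule Suc.IH)
  have "4 * (Suc i + 1) * d \<le> 2 * (4 * (i + 1) * d)" by simp
  also have "\<dots> \<le> 2 * (3 * fact i * d ^ i)" using X by (simp only: mult_le_mono2)
  also have "\<dots> \<le> ((i + 1) * d) * (3 * fact i * d ^ i)"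
  proof (rule mult_right_mono)
    have "2 \<le> i + 1" using Suc.hyps by simp
    then have "2 * 1 \<le> (i + 1) * d" using assms(2) by (intro mult_mono) auto
    then show "2 \<le> (i + 1) * d" by simp
  qed simp
  also have "\<dots> = 3 * fact (Suc i) * d ^ Suc i" by (simp add: algebra_simps)
  finally show ?case .
qed

lemma abs_cc: "\<bar>cc d l\<bar> \<le> 1 / (fact (l div d) * real d ^ (l div d))"
proof (cases "d dvd l")
  case True
  then show ?thesis by (simp add: cc_def abs_mult power_abs abs_divide power_divide mult.commute)
next
  case False then show ?thesis by (simp add: cc_def)
qed

lemma cc1: "cc 1 l = (-1) ^ l / fact l" by (simp add: cc_def)
lemma cc1': "cc (Suc 0) l = (-1) ^ l / fact l" by (simp add: cc_def)

lemma rr1: "rr 1 (Suc m) = (-1) ^ m * (real m / fact (Suc m))"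
proof -
  have "rr 1 (Suc m) = (-1) ^ Suc m / fact (Suc m) + (-1) ^ m / fact m"
    by (simp add: rr_def cc1 cc1')
  also have "\<dots> = (-1) ^ m * (real m / fact (Suc m))"
  proof -
    have f: "(fact (Suc m) :: real) = real (Suc m) * fact m" by (simp add: fact_Suc del: of_nat_Suc)
    have "(-1) ^ m * real (Suc m) / (fact (Suc m) :: real) = (real (Suc m) * (-1) ^ m) / (real (Suc m) * fact m)"
      by (simp only: f mult.commute)
    also have "\<dots> = (-1) ^ m / fact m" by (rule mult_divide_mult_cancel_left) simp
    finally have e: "(-1) ^ m / fact m = (-1) ^ m * real (Suc m) / (fact (Suc m) :: real)" by simp
    have "(-1) ^ Suc m / fact (Suc m) + (-1) ^ m / fact m
        = ((-1) ^ Suc m + (-1) ^ m * real (Suc m)) / (fact (Suc m) :: real)"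
      unfolding e by (rule add_divide_distrib[symmetric])
    also have "(-1) ^ Suc m + (-1) ^ m * real (Suc m) = (-1) ^ m * (real m :: real)"
      by (simp add: algebra_simps)
    finally show ?thesis by simp
  qed
  finally show ?thesis .
qed

lemma UU1_vals: "UU 1 0 = 1" "UU 1 1 = 0" "UU 1 2 = 1/2" "UU 1 3 = 1/3"
  by (simp_all add: UU_def tt_def numeral_3_eq_3 numeral_2_eq_2)

lemma rr_bounds:
  fixes d n :: nat
  assumes d1: "1 \<le> d" and h: "2 * d \<le> n"
  shows "\<bar>rr d n\<bar> * (real n * (real n - 1)) \<le> (2 * real n - real d - 1) * UU d (n div d - 1) + UU d (n div d - 2)"
    and "\<bar>rr d n\<bar> * (real n - 1) \<le> 1"
proof -
  have n2: "n \<ge> 2" using d1 h by simp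
  define i where "i = n div d"
  have i2: "i \<ge> 2"
  proof -
    have "2 * d div d \<le> n div d" using h by (rule div_le_mono)
    then show ?thesis using d1 i_def by simp
  qed
  have "\<bar>rr d n\<bar> * (real n * (real n - 1)) \<le> (2 * real n - real d - 1) * UU d (i - 1) + UU d (i - 2)
       \<and> \<bar>rr d n\<bar> * (real n - 1) \<le> 1"
  proof (cases "d = 1")
    case True
    then have i: "i = n" using i_def by simp
    obtain m where m: "n = Suc m" using n2 by (cases n) auto
    have m1: "m \<ge> 1" using n2 m by simp
    have ar: "\<bar>rr d n\<bar> = real m / fact n" using True m rr1[of m] by (simp add: abs_mult)
    obtain k where k: "m = Suc k" using m1 by (cases m) auto
    have fn: "(fact n :: real) = real n * real m * fact k" using m k by (simp add: fact_Suc del: of_nat_Suc)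
    have fk: "(fact k :: real) \<ge> 1" by simp
    have nm: "real n - 1 = real m" using m by simp
    have mnz: "real m \<noteq> 0" "real n \<noteq> 0" "(fact k :: real) \<noteq> 0" using m1 n2 by auto
    have A1: "\<bar>rr d n\<bar> * (real n * (real n - 1)) = real m / fact k"
      unfolding ar fn nm using mnz by (simp add: field_simps)
    have A2: "\<bar>rr d n\<bar> * (real n - 1) = real m / (real n * fact k)"
      unfolding ar fn nm using mnz by (simp add: field_simps)
    have B2: "\<bar>rr d n\<bar> * (real n - 1) \<le> 1"
    proof -
      have "real m \<le> real n * fact k" using fk m
        by (metis le_add2 mult.right_neutral mult_left_mono of_nat_0_le_iff of_nat_le_iff plus_1_eq_Suc order_trans)
      then show ?thesis unfolding A2 using m by simp
    qed
    have B1: "real m / fact k \<le> (2 * real n - real d - 1) * UU d (i - 1) + UU d (i - 2)"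
    proof (cases "n \<le> 3")
      case True
      then have "n = 2 \<or> n = 3" using n2 by auto
      then show ?thesis
      proof
        assume "n = 2"
        then show ?thesis using m k i True UU1_vals \<open>d = 1\<close> by simp
      next
        assume "n = 3"
        then show ?thesis using m k i \<open>d = 1\<close> by (simp add: numeral_3_eq_3 UU_def tt_def)
      qed
    next
      case False
      then have n4: "n \<ge> 4" by simp
      have u3: "UU d 3 = 1/3" using UU1_vals \<open>d = 1\<close> by simp
      have "i - 1 \<ge> 2" "i - 2 \<ge> 2" using i n4 by auto
      then have u1: "UU d (i - 1) \<ge> 1/3" and u2: "UU d (i - 2) \<ge> 1/3"
        using UU_bounds(4)[OF d1, of "i - 1"] UU_bounds(4)[OF d1, of "i - 2"] u3 by auto
      have fk2: "(fact k :: real) \<ge> 2"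
      proof -
        have "k \<ge> 2" using n4 m k by simp
        then have "(fact 2 :: real) \<le> fact k" by (rule fact_mono)
        then show ?thesis by simp
      qed
      have "real m / fact k \<le> real m / 2" by (rule divide_left_mono) (use fk2 in auto)
      also have "\<dots> \<le> (2 * real n - 2) * (1/3) + 1/3" using m by simp
      also have "\<dots> \<le> (2 * real n - real d - 1) * UU d (i - 1) + UU d (i - 2)"
        using u1 u2 \<open>d = 1\<close> n4 by (intro add_mono mult_left_mono) auto
      finally show ?thesis .
    qed
    show ?thesis using A1 B1 B2 by simp
  next
    case False
    then have d2: "d \<ge> 2" using d1 by simp
    define K where "K = fact i * real d ^ i"
    have Kpos: "K > 0" unfolding K_def using d1 by simp
    have rK: "\<bar>rr d n\<bar> \<le> 1 / K"
    proof (cases "d dvd n")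
      case True
      have "\<not> d dvd (n - 1)"
      proof
        assume "d dvd (n - 1)"
        then have "d dvd (n - (n - 1))" using True by (rule dvd_diff_nat[rotated])
        then show False using n2 d2 by simp
      qed
      then have "rr d n = cc d n" using n2 by (simp add: rr_def cc_def)
      then show ?thesis using abs_cc[of d n] K_def i_def by simp
    next
      case False
      then have "cc d n = 0" by (simp add: cc_def)
      then have "rr d n = cc d (n - 1)" using n2 by (simp add: rr_def)
      moreover have "(n - 1) div d = i"
      proof -
        have "n = Suc (n - 1)" using n2 by simp
        then have "n div d = (if Suc (n - 1) mod d = 0 then Suc ((n - 1) div d) else (n - 1) div d)"
          using div_Suc[of "n - 1" d] by simp
        then show ?thesis using False i_def \<open>n = Suc (n - 1)\<close> by (metis dvd_eq_mod_eq_0)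
      qed
      ultimately show ?thesis using abs_cc[of d "n - 1"] K_def by simp
    qed
    have nK: "4 * (real n + 1) \<le> 3 * K"
    proof -
      have m1: "n div d * d + n mod d = n" by (rule div_mult_mod_eq)
      have m2: "n mod d < d" using d1 by simp
      have "n < i * d + d" using m1 m2 unfolding i_def by linarith
      then have "n + 1 \<le> (i + 1) * d" by (simp add: algebra_simps)
      then have "4 * (n + 1) \<le> 4 * (i + 1) * d" by (simp only: mult.assoc mult_le_mono2)
      also have "\<dots> \<le> 3 * fact i * d ^ i" by (rule nat_key[OF i2 d2])
      finally have "real (4 * (n + 1)) \<le> real (3 * fact i * d ^ i)" by (simp only: of_nat_le_iff)
      then show ?thesis unfolding K_def by (simp add: of_nat_fact)
    qed
    have u1: "UU d (i - 1) \<ge> 1/2" and u2: "UU d (i - 2) \<ge> 1/2"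
    proof -
      have "real d \<ge> 2" using d2 by simp
      then have "1 / real d \<le> 1 / 2" by (intro divide_left_mono) auto
      then have "UU d 1 \<ge> 1/2" unfolding UU_1 by linarith
      then show "UU d (i - 1) \<ge> 1/2" "UU d (i - 2) \<ge> 1/2" using UU_bounds(1)[OF d1] by (meson order_trans)+
    qed
    have rn: "\<bar>rr d n\<bar> * (real n * (real n - 1)) \<le> (real n * (real n - 1)) / K"
      using rK n2 by (simp add: divide_right_mono mult_right_mono le_divide_eq Kpos mult.commute)
    also have "\<dots> \<le> (real n * (real n - 1)) * 3 / (4 * (real n + 1))"
    proof -
      have a0: "0 \<le> real n * (real n - 1)" using n2 by simp
      have "(real n * (real n - 1)) / K = (real n * (real n - 1)) * 3 / (3 * K)" using Kpos by simp
      also have "\<dots> \<le> (real n * (real n - 1)) * 3 / (4 * (real n + 1))"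
        by (rule divide_left_mono) (use nK a0 Kpos in auto)
      finally show ?thesis .
    qed
    also have "\<dots> \<le> 3 * real n / 4" using n2 by (simp add: field_simps)
    also have "\<dots> \<le> (2 * real n - real d - 1) * (1/2) + 1/2"
    proof -
      have "real n \<ge> 2 * real d" using h by linarith
      moreover have "(2 * real n - real d - 1) * (1 / 2) + 1 / 2 = real n - real d / 2" by (simp add: field_simps)
      ultimately show ?thesis by linarith
    qed
    also have "\<dots> \<le> (2 * real n - real d - 1) * UU d (i - 1) + UU d (i - 2)"
    proof -
      have "2 * real n - real d - 1 \<ge> 0" using h d1 by linarith
      then show ?thesis using u1 u2 by (intro add_mono mult_left_mono) auto
    qed
    finally have B1: "\<bar>rr d n\<bar> * (real n * (real n - 1)) \<le> (2 * real n - real d - 1) * UU d (i - 1) + UU d (i - 2)" .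
    have "\<bar>rr d n\<bar> * (real n - 1) \<le> (real n - 1) / K"
      using rK n2 by (simp add: divide_right_mono mult_right_mono le_divide_eq Kpos mult.commute)
    also have "\<dots> \<le> 1" using nK Kpos by (simp add: field_simps)
    finally show ?thesis using B1 by simp
  qed
  then show "\<bar>rr d n\<bar> * (real n * (real n - 1)) \<le> (2 * real n - real d - 1) * UU d (n div d - 1) + UU d (n div d - 2)"
    and "\<bar>rr d n\<bar> * (real n - 1) \<le> 1" using i_def by auto
qed



lemma D_bounds:
  fixes d i :: nat
  assumes d1: "1 \<le> d" and i2: "2 \<le> i"
  shows "0 < 1 - exp (- 1 / real d) - 2 / (fact (i + 1) * real d ^ (i + 1))"
    and "1 - exp (- 1 / real d) - 2 / (fact (i + 1) * real d ^ (i + 1)) \<le> 1 / real d"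
proof -
  have rd: "real d \<ge> 1" using d1 by simp
  have T0: "0 \<le> 2 / (fact (i + 1) * real d ^ (i + 1))" by simp
  have "1 + (- 1 / real d) \<le> exp (- 1 / real d)" by (rule exp_ge_add_one_self)
  then show "1 - exp (- 1 / real d) - 2 / (fact (i + 1) * real d ^ (i + 1)) \<le> 1 / real d"
    using T0 by linarith
  have e1: "1 + 1 / real d \<le> exp (1 / real d)" by (rule exp_ge_add_one_self)
  have em: "exp (- 1 / real d) = 1 / exp (1 / real d)" by (simp add: exp_minus inverse_eq_divide)
  have "exp (- 1 / real d) \<le> 1 / (1 + 1 / real d)"
  proof -
    have p: "0 < 1 + 1 / real d" using rd by (simp add: add_pos_nonneg)
    show ?thesis unfolding em by (rule divide_left_mono) (use e1 p in \<open>auto intro!: mult_pos_pos\<close>)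
  qed
  also have "1 / (1 + 1 / real d) = real d / (real d + 1)" using rd by (simp add: field_simps)
  finally have "1 - exp (- 1 / real d) \<ge> 1 / (real d + 1)" using rd by (simp add: field_simps)
  moreover have "2 / (fact (i + 1) * real d ^ (i + 1)) < 1 / (real d + 1)"
  proof -
    have f6: "(6::real) \<le> fact (i + 1)"
    proof -
      have "(fact 3 :: real) \<le> fact (i + 1)" using i2 by (intro fact_mono) simp
      then show ?thesis by (simp add: numeral_3_eq_3)
    qed
    have p3: "real d ^ 3 \<le> real d ^ (i + 1)" using i2 rd by (intro power_increasing) auto
    have "6 * real d ^ 3 \<le> fact (i + 1) * real d ^ (i + 1)"
      using f6 p3 by (intro mult_mono) auto
    then have "2 / (fact (i + 1) * real d ^ (i + 1)) \<le> 2 / (6 * real d ^ 3)"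
      using rd by (intro divide_left_mono) auto
    also have "\<dots> < 1 / (real d + 1)"
    proof -
      have "real d ^ 3 \<ge> real d" using rd
        by (metis power_one_right power_increasing one_le_numeral)
      then have "real d + 1 < 3 * real d ^ 3" using rd by linarith
      then show ?thesis using rd by (simp add: field_simps)
    qed
    finally show ?thesis .
  qed
  ultimately show "0 < 1 - exp (- 1 / real d) - 2 / (fact (i + 1) * real d ^ (i + 1))" by linarith
qed

theorem corollary2p4:
  fixes d n :: nat
  assumes "1 \<le> d" and "2 * d \<le> n"
  defines "i \<equiv> n div d"
  shows "\<bar>real (card (cycA_plus n d)) - real (card (cycA_minus n d))\<bar>
           \<le> fact n * ((2 * real n - real d - 1) / (real n * (real n - 1)) * (1 - aseq d (i - 1))
                        + 1 / (real n * (real n - 1)) * (1 - aseq d (i - 2)))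
    \<and> fact n * ((2 * real n - real d - 1) / (real n * (real n - 1)) * (1 - aseq d (i - 1))
                        + 1 / (real n * (real n - 1)) * (1 - aseq d (i - 2)))
           \<le> fact n * (2 / (real n - 1))
    \<and> \<bar>(real (card (cycA_plus n d)) - real (card (cycA_minus n d))) / real (card (cycA n d))\<bar>
           \<le> 1 / (real n - 1) * (2 / (1 - exp (- 1 / real d) - 2 / (fact (i + 1) * real d ^ (i + 1))))"
proof -
  note d1 = assms(1) and h = assms(2)
  have n2: "n \<ge> 2" using d1 h by simp
  have i2: "i \<ge> 2"
  proof -
    have "2 * d div d \<le> n div d" using h by (rule div_le_mono)
    then show ?thesis using d1 i_def by simp
  qed
  define S where "S = {1..n}"
  have fS: "finite S" and cS: "card S = n" unfolding S_def by simp_all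
  define N where "N = {g. g permutes S \<and> nod d S g}"
  define P where "P = {g. g permutes S}"
  have cycA: "cycA n d = {g. g permutes S \<and> \<not> nod d S g}"
    unfolding cycA_def has_cycle_of_length_def nod_def S_def by auto
  have plus: "cycA_plus n d = cycA n d \<inter> {g. evenperm g}"
    unfolding cycA_plus_def by auto
  have minus: "cycA_minus n d = cycA n d \<inter> - {g. evenperm g}"
    unfolding cycA_minus_def by auto
  have finP: "finite P" unfolding P_def using finite_permutations[OF fS] .
  have PU: "P = cycA n d \<union> N" unfolding P_def N_def cycA by auto
  have disj: "cycA n d \<inter> N = {}" unfolding N_def cycA by auto
  have finA: "finite (cycA n d)" using finP PU by simp
  have finN: "finite N" using finP PU by simp
  have recF: "real m * qq d m = (\<Sum>k<m. (if Suc k = d then 0 else eps False (Suc k)) * qq d (m - Suc k))"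
    if "m \<ge> 1" for m
    unfolding eps_F using qq_rec[OF d1, of m] by simp
  have Wc: "(\<Sum>g\<in>N. wt False g) = fact n * qq d n"
    unfolding N_def cS[symmetric]
    by (rule W_formula[where cl="qq d" and b=False and d=d, OF qq_0 recF fS])
  have cN: "real (card N) = fact n * qq d n" using Wc by (simp add: wt_def)
  have recT: "real m * rr d' m = (\<Sum>k<m. (if Suc k = d' then 0 else eps True (Suc k)) * rr d' (m - Suc k))"
    if "m \<ge> 1" "d' \<ge> 1" for m d'
    unfolding eps_T using rr_rec[OF that(2), of m] by simp
  have Ws: "(\<Sum>g\<in>N. wt True g) = fact n * rr d n"
    unfolding N_def cS[symmetric]
    by (rule W_formula[where cl="rr d" and b=True and d=d, OF rr_0 recT[OF _ d1] fS])
  have Wall: "(\<Sum>g\<in>P. wt True g) = 0"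
  proof -
    have sn: "Suc n \<ge> 1" by simp
    have PP: "{g. g permutes S \<and> nod (Suc n) S g} = P"
    proof -
      have "nod (Suc n) S g" if g: "g permutes S" for g
        unfolding nod_def
      proof
        fix x assume x: "x \<in> S"
        have "card (orbit g x) \<le> card S" using permutes_orbit_subset[OF g x] fS by (rule card_mono[rotated])
        then show "card (orbit g x) \<noteq> Suc n" using cS by simp
      qed
      then show ?thesis unfolding P_def by auto
    qed
    have "(\<Sum>g\<in>{g. g permutes S \<and> nod (Suc n) S g}. wt True g) = fact (card S) * rr (Suc n) (card S)"
      by (rule W_formula[where cl="rr (Suc n)" and b=True and d="Suc n", OF rr_0 recT[OF _ sn] fS])
    moreover have "rr (Suc n) n = 0"
    proof -
      have "\<not> Suc n dvd l" if "0 < l" "l \<le> n" for l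
        using that dvd_imp_le[of "Suc n" l] by auto
      then have "cc (Suc n) n = 0" "cc (Suc n) (n - 1) = 0" using n2 by (auto simp: cc_def)
      then show ?thesis using n2 by (simp add: rr_def)
    qed
    ultimately show ?thesis using PP cS by simp
  qed
  have split: "(\<Sum>g\<in>P. wt True g) = (\<Sum>g\<in>cycA n d. wt True g) + (\<Sum>g\<in>N. wt True g)"
    unfolding PU by (rule sum.union_disjoint[OF finA finN disj])
  have Fsum: "(\<Sum>g\<in>cycA n d. wt True g) = real (card (cycA_plus n d)) - real (card (cycA_minus n d))"
  proof -
    have "(\<Sum>g\<in>cycA n d. wt True g) = (\<Sum>g\<in>cycA n d. if evenperm g then 1 else - 1)"
      by (intro sum.cong refl) (simp add: wt_def sign_def)
    also have "\<dots> = (\<Sum>g\<in>cycA n d \<inter> {g. evenperm g}. 1) + (\<Sum>g\<in>cycA n d \<inter> - {g. evenperm g}. - 1)"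
      by (rule sum.If_cases[OF finA])
    also have "\<dots> = real (card (cycA_plus n d)) - real (card (cycA_minus n d))"
      unfolding plus minus by simp
    finally show ?thesis .
  qed
  define F where "F = real (card (cycA_plus n d)) - real (card (cycA_minus n d))"
  have F: "F = - (fact n * rr d n)" using Wall split Fsum Ws F_def by simp
  have cardA: "real (card (cycA n d)) = fact n * (1 - UU d i)"
  proof -
    have "card P = fact n" unfolding P_def by (rule card_permutations[OF cS fS])
    moreover have "card P = card (cycA n d) + card N" unfolding PU by (rule card_Un_disjoint[OF finA finN disj])
    ultimately have e: "card (cycA n d) + card N = fact n" by simp
    have "real (card (cycA n d)) + real (card N) = fact n"
      unfolding of_nat_add[symmetric] e by (rule of_nat_fact)
    then have "real (card (cycA n d)) = fact n - fact n * qq d n" using cN by linarith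
    then show ?thesis using qq_UU[OF d1, of n] i_def by (simp add: algebra_simps)
  qed
  define U1 where "U1 = UU d (i - 1)"
  define U2 where "U2 = UU d (i - 2)"
  have a1: "1 - aseq d (i - 1) = U1" unfolding U1_def using aseq_UU[OF d1] by simp
  have a2: "1 - aseq d (i - 2) = U2" unfolding U2_def using aseq_UU[OF d1] by simp
  define nn where "nn = real n * (real n - 1)"
  have nnpos: "nn > 0" unfolding nn_def using n2 by simp
  define X where "X = (2 * real n - real d - 1) * U1 + U2"
  have R0: "(2 * real n - real d - 1) / nn * U1 + 1 / nn * U2 = X / nn"
    unfolding X_def by (simp add: add_divide_distrib)
  have rb1: "\<bar>rr d n\<bar> * nn \<le> X" using rr_bounds(1)[OF d1 h] unfolding nn_def X_def U1_def U2_def i_def .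
  have rb2: "\<bar>rr d n\<bar> * (real n - 1) \<le> 1" using rr_bounds(2)[OF d1 h] .
  have fpos: "(fact n :: real) > 0" by simp
  have ineq1: "\<bar>F\<bar> \<le> fact n * (X / nn)"
  proof -
    have "\<bar>rr d n\<bar> \<le> X / nn" using rb1 nnpos by (simp add: pos_le_divide_eq)
    then have "fact n * \<bar>rr d n\<bar> \<le> fact n * (X / nn)" using fpos by (intro mult_left_mono) auto
    moreover have "\<bar>F\<bar> = fact n * \<bar>rr d n\<bar>" unfolding F by (simp add: abs_mult)
    ultimately show ?thesis by simp
  qed
  have ineq2: "fact n * (X / nn) \<le> fact n * (2 / (real n - 1))"
  proof -
    have u1: "0 \<le> U1" "U1 \<le> 1" and u2: "0 \<le> U2" "U2 \<le> 1"
    proof -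
      have "1 / real d \<le> 1" using d1 by simp
      then have "0 \<le> UU d 1" unfolding UU_1 by linarith
      then show "0 \<le> U1" "U1 \<le> 1" "0 \<le> U2" "U2 \<le> 1" unfolding U1_def U2_def
        using UU_bounds(1,2)[OF d1] by (meson order_trans)+
    qed
    have c0: "0 \<le> 2 * real n - real d - 1" using h d1 by linarith
    have "X \<le> (2 * real n - real d - 1) * 1 + 1" unfolding X_def
      using u1 u2 c0 by (intro add_mono mult_left_mono) auto
    also have "\<dots> \<le> 2 * real n" using d1 by simp
    finally have "X / nn \<le> 2 * real n / nn" using nnpos by (simp add: divide_right_mono)
    also have "2 * real n / nn = 2 / (real n - 1)" unfolding nn_def using n2 by (simp add: field_simps)
    finally show ?thesis using fpos by (intro mult_left_mono) auto
  qed
  have ineq3: "\<bar>F / real (card (cycA n d))\<bar>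
      \<le> 1 / (real n - 1) * (2 / (1 - exp (- 1 / real d) - 2 / (fact (i + 1) * real d ^ (i + 1))))"
  proof -
    define D where "D = 1 - exp (- 1 / real d) - 2 / (fact (i + 1) * real d ^ (i + 1))"
    have Dpos: "D > 0" and Dle: "D \<le> 1 / real d" unfolding D_def using D_bounds[OF d1 i2] by auto
    have rd: "real d \<ge> 1" using d1 by simp
    have Ui: "UU d i \<le> UU d 2" using UU_bounds(3)[OF d1, of i] i2 by simp
    have L: "1 - UU d i \<ge> 1 / (2 * real d)"
    proof -
      have "1 - UU d 2 = 1 / real d - 1 / (2 * real d ^ 2)" by (simp add: UU_2)
      moreover have "1 / (2 * real d ^ 2) \<le> 1 / (2 * real d)"
        using rd by (intro divide_left_mono) (auto simp: power2_eq_square)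
      moreover have "1 / real d - 1 / (2 * real d) = 1 / (2 * real d)" using rd by (simp add: field_simps)
      ultimately show ?thesis using Ui by linarith
    qed
    have Lpos: "1 - UU d i > 0" using L rd by (smt (verit) divide_pos_pos)
    have n1: "real n - 1 > 0" using n2 by simp
    have "\<bar>F / real (card (cycA n d))\<bar> = \<bar>rr d n\<bar> / (1 - UU d i)"
      unfolding F cardA using fpos Lpos by (simp add: abs_mult abs_divide)
    also have "\<dots> \<le> (1 / (real n - 1)) / (1 / (2 * real d))"
    proof (rule frac_le)
      show "0 \<le> 1 / (real n - 1)" using n1 by simp
      show "\<bar>rr d n\<bar> \<le> 1 / (real n - 1)" using rb2 n1 by (simp add: pos_le_divide_eq)
      show "0 < 1 / (2 * real d)" using rd by simp
      show "1 / (2 * real d) \<le> 1 - UU d i" by (rule L)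
    qed
    also have "\<dots> = 1 / (real n - 1) * (2 * real d)" using rd by simp
    also have "\<dots> \<le> 1 / (real n - 1) * (2 / D)"
    proof (rule mult_left_mono)
      have "2 * real d = 2 / (1 / real d)" using rd by simp
      also have "\<dots> \<le> 2 / D" using Dpos Dle rd by (intro divide_left_mono) (auto intro: divide_pos_pos)
      finally show "2 * real d \<le> 2 / D" .
    qed (use n1 in simp)
    finally show ?thesis unfolding D_def .
  qed
  have E: "(2 * real n - real d - 1) / (real n * (real n - 1)) * (1 - aseq d (i - 1))
      + 1 / (real n * (real n - 1)) * (1 - aseq d (i - 2)) = X / nn"
    unfolding a1 a2 using R0 unfolding nn_def .
  show ?thesis
    unfolding E using ineq1[unfolded F_def] ineq2 ineq3[unfolded F_def] by blast
qed


end
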